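(* Let $P\subset\mathbb{R}^d$ with $|P|=n$, let $D=\operatorname{diam}P$, $r\in[n]$ and $\varepsilon>0$. Then there is a set $F\subset\mathbb{R}^d$ with $|F|\le r^r\varepsilon^{-r}$ such that for every $Y\subseteq P$ with $|Y|\ge\varepsilon n$, \[ \left(F+\frac{3.5D}{\sqrt r}B\right)\cap\operatorname{conv}Y\ne\emptyset. \]
   Context: $B$ denotes the closed Euclidean unit ball centred at the origin of $\mathbb{R}^d$, and $+$ is Minkowski sum, so $F+\rho B$ is the union of the closed balls of radius $\rho$ centred at points of $F$. *)

theory Defs
  imports "HOL-Analysis.Analysis"
begin

end

theory Submission
  imports Defs
begin

lemma sum_list_shift:
  fixes c :: "'a::real_vector"
  shows "sum_list (map (\<lambda>y. y - c) t) = sum_list t - real (length t) *\<^sub>R c"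
  by (induction t) (auto simp: algebra_simps)

lemma avg_in_hull:
  fixes Y :: "'a::real_vector set"
  assumes "set t \<subseteq> Y" "t \<noteq> []"
  shows "(1 / real (length t)) *\<^sub>R sum_list t \<in> convex hull Y"
  using assms
proof (induction t)
  case Nil then show ?case by simp
next
  case (Cons x xs)
  show ?case
  proof (cases "xs = []")
    case True
    then show ?thesis using Cons.prems by (simp add: hull_inc)
  next
    case False
    define k where "k = real (length xs)"
    have k: "k > 0" using False by (simp add: k_def)
    have h1: "(1 / k) *\<^sub>R sum_list xs \<in> convex hull Y" using Cons False by (simp add: k_def)
    have h2: "x \<in> convex hull Y" using Cons.prems by (simp add: hull_inc)
    have "(1/(k+1)) *\<^sub>R x + (k/(k+1)) *\<^sub>R ((1 / k) *\<^sub>R sum_list xs) \<in> convex hull Y"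
      using convexD[OF convex_convex_hull h2 h1, of "1/(k+1)" "k/(k+1)"] k
      by (simp add: field_simps)
    moreover have "(1/(k+1)) *\<^sub>R x + (k/(k+1)) *\<^sub>R ((1 / k) *\<^sub>R sum_list xs)
       = (1 / real (length (x#xs))) *\<^sub>R sum_list (x#xs)"
      using k by (simp add: k_def scaleR_add_right add.commute)
    ultimately show ?thesis by simp
  qed
qed

lemma var_id:
  fixes Y :: "'a::real_inner set" and c :: 'a
  assumes fin: "finite Y" and z: "(\<Sum>y\<in>Y. y - c) = 0"
  shows "real (card Y) * (\<Sum>t\<in>{xs. set xs \<subseteq> Y \<and> length xs = k}. (norm (sum_list (map (\<lambda>y. y - c) t)))^2)
     = real k * real (card Y)^k * (\<Sum>y\<in>Y. (norm (y - c))^2)"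
proof (induction k)
  case 0
  have "{xs. set xs \<subseteq> Y \<and> length xs = 0} = {[]}" by auto
  then show ?case by simp
next
  case (Suc k)
  let ?L = "{xs. set xs \<subseteq> Y \<and> length xs = k}"
  let ?s = "\<lambda>t. sum_list (map (\<lambda>y. y - c) t)"
  let ?V = "\<Sum>y\<in>Y. (norm (y - c))^2"
  have finL: "finite ?L" using finite_lists_length_eq[OF fin] .
  have inj: "inj_on (\<lambda>(xs, n). n#xs) (?L \<times> Y)" by (auto simp: inj_on_def)
  have "(\<Sum>t\<in>{xs. set xs \<subseteq> Y \<and> length xs = Suc k}. (norm (?s t))^2)
      = (\<Sum>p\<in>?L \<times> Y. (norm (?s ((\<lambda>(xs, n). n#xs) p)))^2)"
    unfolding lists_length_Suc_eq by (subst sum.reindex[OF inj]) simp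
  also have "\<dots> = (\<Sum>t\<in>?L. \<Sum>y\<in>Y. (norm ((y - c) + ?s t))^2)"
    by (simp add: sum.cartesian_product split_def)
  also have "\<dots> = (\<Sum>t\<in>?L. \<Sum>y\<in>Y. (norm (y - c))^2 + 2 * inner (y - c) (?s t) + (norm (?s t))^2)"
    by (intro sum.cong refl) (simp add: power2_norm_eq_inner inner_add_left inner_add_right inner_commute algebra_simps)
  also have "\<dots> = (\<Sum>t\<in>?L. ?V + 2 * inner (\<Sum>y\<in>Y. y - c) (?s t) + real (card Y) * (norm (?s t))^2)"
    by (simp add: sum.distrib sum_distrib_left inner_sum_left)
  also have "\<dots> = real (card Y)^k * ?V + real (card Y) * (\<Sum>t\<in>?L. (norm (?s t))^2)"
    using z by (simp add: sum.distrib sum_distrib_left card_lists_length_eq[OF fin])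
  finally have eq: "(\<Sum>t\<in>{xs. set xs \<subseteq> Y \<and> length xs = Suc k}. (norm (?s t))^2)
      = real (card Y)^k * ?V + real (card Y) * (\<Sum>t\<in>?L. (norm (?s t))^2)" .
  show ?case unfolding eq using Suc.IH by (simp add: algebra_simps)
qed


lemma good_count:
  fixes Y :: "'a::real_inner set" and c :: 'a
  assumes fin: "finite Y" and ne: "Y \<noteq> {}" and r1: "r \<ge> 1" and rho: "\<rho> > 0"
    and bd: "\<forall>y\<in>Y. norm (y - c) \<le> D"
    and c_def: "c = (1 / real (card Y)) *\<^sub>R (\<Sum>y\<in>Y. y)"
    and ineq: "2 * D^2 \<le> real r * \<rho>^2"
  shows "real (card Y)^r \<le> 2 * real (card {t \<in> {xs. set xs \<subseteq> Y \<and> length xs = r}.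
            norm ((1 / real r) *\<^sub>R sum_list t - c) \<le> \<rho>})"
proof -
  define m where "m = card Y"
  have m0: "m > 0" using fin ne by (simp add: m_def card_gt_0_iff)
  let ?L = "{xs. set xs \<subseteq> Y \<and> length xs = r}"
  let ?s = "\<lambda>t. sum_list (map (\<lambda>y. y - c) t)"
  let ?a = "\<lambda>t. (1 / real r) *\<^sub>R sum_list t"
  let ?V = "\<Sum>y\<in>Y. (norm (y - c))^2"
  define G where "G = {t \<in> ?L. norm (?a t - c) \<le> \<rho>}"
  define B where "B = {t \<in> ?L. \<not> norm (?a t - c) \<le> \<rho>}"
  have finL: "finite ?L" using finite_lists_length_eq[OF fin] .
  have cardL: "card ?L = m^r" using card_lists_length_eq[OF fin] by (simp add: m_def)
  have z: "(\<Sum>y\<in>Y. y - c) = 0"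
    using m0 by (simp add: sum_subtractf c_def m_def[symmetric] sum_constant_scaleR)
  have LGB: "?L = G \<union> B" "G \<inter> B = {}" by (auto simp: G_def B_def)
  have finG1: "finite G" by (rule finite_subset[OF _ finL]) (auto simp: G_def)
  have finG2: "finite B" by (rule finite_subset[OF _ finL]) (auto simp: B_def)
  note finG = finG1 finG2
  have cGB: "card G + card B = m^r"
    using card_Un_disjoint[OF finG LGB(2)] LGB(1) cardL by simp
  have sa: "norm (?s t) = real r * norm (?a t - c)" if "t \<in> ?L" for t
  proof -
    have "?s t = real r *\<^sub>R (?a t - c)"
      using that r1 by (simp add: sum_list_shift algebra_simps)
    then show ?thesis by simp
  qed
  have "real (card B) * (real r * \<rho>)^2 = (\<Sum>t\<in>B. (real r * \<rho>)^2)" by simp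
  also have "\<dots> \<le> (\<Sum>t\<in>B. (norm (?s t))^2)"
  proof (rule sum_mono)
    fix t assume t: "t \<in> B"
    then have tl: "t \<in> ?L" and gt: "\<rho> < norm (?a t - c)" by (auto simp: B_def)
    have "real r * \<rho> \<le> norm (?s t)" using sa[OF tl] gt r1
      by (simp add: mult_left_mono)
    then show "(real r * \<rho>)^2 \<le> (norm (?s t))^2"
      using rho r1 by (intro power_mono) auto
  qed
  also have "\<dots> \<le> (\<Sum>t\<in>?L. (norm (?s t))^2)"
    using LGB finG by (intro sum_mono2) auto
  finally have b1: "real (card B) * (real r * \<rho>)^2 \<le> (\<Sum>t\<in>?L. (norm (?s t))^2)" .
  have V: "?V \<le> real m * D^2"
  proof -
    have "?V \<le> (\<Sum>y\<in>Y. D^2)"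
      using bd by (intro sum_mono power_mono) auto
    then show ?thesis by (simp add: m_def)
  qed
  have eqv: "real m * (\<Sum>t\<in>?L. (norm (?s t))^2) = real r * real m^r * ?V"
    using var_id[OF fin z, of r] by (simp add: m_def)
  have "real m * (real (card B) * (real r * \<rho>)^2) \<le> real m * (\<Sum>t\<in>?L. (norm (?s t))^2)"
    using b1 by (intro mult_left_mono) auto
  also have "\<dots> = real r * real m^r * ?V" by (rule eqv)
  also have "\<dots> \<le> real r * real m^r * (real m * D^2)"
    using V by (intro mult_left_mono) auto
  finally have Y: "real m * (real (card B) * (real r * \<rho>)^2) \<le> real r * real m^r * (real m * D^2)" .
  have e1: "real m * (real (card B) * (real r * \<rho>)^2) = (real m * real r) * (real (card B) * (real r * \<rho>^2))"
    by (simp add: power2_eq_square)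
  have e2: "real r * real m^r * (real m * D^2) = (real m * real r) * (real m^r * D^2)"
    by simp
  have mr: "0 < real m * real r" using m0 r1 by simp
  have "real (card B) * (real r * \<rho>^2) \<le> real m^r * D^2"
    using Y unfolding e1 e2 using mult_left_le_imp_le[OF _ mr] by blast
  also have "\<dots> \<le> real m^r * (real r * \<rho>^2 / 2)"
    using ineq by (intro mult_left_mono) auto
  also have "\<dots> = (real m^r / 2) * (real r * \<rho>^2)" by simp
  finally have X: "real (card B) * (real r * \<rho>^2) \<le> (real m^r / 2) * (real r * \<rho>^2)" .
  have K: "0 < real r * \<rho>^2" using rho r1 by simp
  have "real (card B) \<le> real m^r / 2"
    using mult_right_le_imp_le[OF X K] .
  moreover have "real (card G) + real (card B) = real m ^ r"
    using arg_cong[OF cGB, of real] by simp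
  ultimately have "real m^r \<le> 2 * real (card G)" by linarith
  then show ?thesis by (simp add: G_def m_def)
qed


lemma ball_rep:
  fixes w :: "'a::real_normed_vector"
  assumes "norm w \<le> \<rho>"
  shows "w \<in> (\<lambda>b. \<rho> *\<^sub>R b) ` cball 0 1"
proof (cases "\<rho> = 0")
  case True
  then have "w = 0" using assms by simp
  then show ?thesis using True by (auto intro!: image_eqI[of _ _ 0])
next
  case False
  then have "\<rho> > 0" using assms norm_ge_zero[of w] by linarith
  then show ?thesis using assms
    by (intro image_eqI[of _ _ "(1/\<rho>) *\<^sub>R w"]) (auto simp: field_simps)
qed

theorem theorem7p3:
  fixes P :: "'a::euclidean_space set" and n r :: nat and \<epsilon> D :: real
  assumes "finite P" and "card P = n"
    and "D = diameter P"
    and "1 \<le> r" and "r \<le> n"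
    and "\<epsilon> > 0"
  shows "\<exists>F :: 'a set. finite F \<and> real (card F) \<le> real r ^ r * \<epsilon> powr (- real r) \<and>
           (\<forall>Y. Y \<subseteq> P \<and> real (card Y) \<ge> \<epsilon> * real n \<longrightarrow>
              {f + v | f v. f \<in> F \<and> v \<in> (\<lambda>b. (3.5 * D / sqrt (real r)) *\<^sub>R b) ` cball 0 1}
                \<inter> convex hull Y \<noteq> {})"
proof -
  note finP = assms(1) and cardP = assms(2) and Ddef = assms(3) and r1 = assms(4) and rn = assms(5)
    and eps = assms(6)
  define \<rho> where "\<rho> = 3.5 * D / sqrt (real r)"
  have bdP: "dist x y \<le> D" if "x \<in> P" "y \<in> P" for x y
    using diameter_bounded_bound[OF finite_imp_bounded[OF finP] that] Ddef by simp
  have D0: "D \<ge> 0" using diameter_ge_0[OF finite_imp_bounded[OF finP]] Ddef by simp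
  have n1: "n \<ge> 1" using r1 rn by simp
  have Pne: "P \<noteq> {}" using n1 cardP by auto
  have epow: "\<epsilon> powr (- real r) = 1 / \<epsilon>^r"
    using eps by (simp add: powr_minus powr_realpow divide_inverse)
  have rr: "real r ^ r \<ge> real r"
    using r1 power_increasing[of 1 r "real r"] by simp
  have heavy_ne: "Y \<noteq> {}" and heavy_fin: "finite Y"
    if "Y \<subseteq> P" "real (card Y) \<ge> \<epsilon> * real n" for Y
  proof -
    show "finite Y" using that finite_subset finP by blast
    have "\<epsilon> * real n > 0" using eps n1 by simp
    then have "card Y > 0" using that by linarith
    then show "Y \<noteq> {}" by auto
  qed
  show ?thesis
  proof (cases "\<epsilon> > 1")
    case True
    have "\<not> (Y \<subseteq> P \<and> real (card Y) \<ge> \<epsilon> * real n)" for Y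
    proof
      assume h: "Y \<subseteq> P \<and> real (card Y) \<ge> \<epsilon> * real n"
      then have "card Y \<le> n" using card_mono[OF finP] cardP by blast
      moreover have "\<epsilon> * real n > real n" using True n1 by simp
      ultimately show False using h by linarith
    qed
    then show ?thesis
      by (intro exI[of _ "{}"]) (use eps in \<open>auto simp: epow intro!: divide_nonneg_nonneg\<close>)
  next
    case False
    then have e1: "\<epsilon> \<le> 1" by simp
    show ?thesis
    proof (cases "D \<le> \<rho>")
      case True
      obtain p0 where p0: "p0 \<in> P" using Pne by auto
      have "\<epsilon>^r \<le> 1" using e1 eps by (simp add: power_le_one)
      then have "1 \<le> 1 / \<epsilon>^r" using eps by (simp add: field_simps)
      moreover have "1 \<le> real r ^ r" using rr r1 by simp
      ultimately have cb: "real (card {p0}) \<le> real r ^ r * \<epsilon> powr (- real r)"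
        unfolding epow using mult_mono[of 1 "real r ^ r" 1 "1/\<epsilon>^r"] by simp
      show ?thesis
      proof (intro exI[of _ "{p0}"] conjI allI impI)
        fix Y assume Y: "Y \<subseteq> P \<and> \<epsilon> * real n \<le> real (card Y)"
        then obtain y where y: "y \<in> Y" using heavy_ne by blast
        have "norm (y - p0) \<le> \<rho>" using bdP[of y p0] Y y p0 True by (auto simp: dist_norm)
        then have mem: "y - p0 \<in> (\<lambda>b. \<rho> *\<^sub>R b) ` cball 0 1" by (rule ball_rep)
        have "\<exists>f v. y = f + v \<and> f \<in> {p0} \<and> v \<in> (\<lambda>b. \<rho> *\<^sub>R b) ` cball 0 1"
          by (intro exI[of _ p0] exI[of _ "y - p0"]) (use mem in simp)
        then have "y \<in> {f + v | f v. f \<in> {p0} \<and> v \<in> (\<lambda>b. \<rho> *\<^sub>R b) ` cball 0 1}"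
          by simp
        moreover have "y \<in> convex hull Y" using y by (simp add: hull_inc)
        ultimately show "{f + v | f v. f \<in> {p0} \<and> v \<in> (\<lambda>b. (3.5 * D / sqrt (real r)) *\<^sub>R b) ` cball 0 1}
                \<inter> convex hull Y \<noteq> {}" unfolding \<rho>_def by blast
      qed (use cb in auto)
    next
      case False
      then have rhoD: "\<rho> < D" by simp
      have Dpos: "D > 0" using rhoD D0 \<rho>_def by (cases "D = 0") auto
      have sr: "sqrt (real r) > 0" using r1 by simp
      have "3.5 * D < D * sqrt (real r)" using rhoD sr unfolding \<rho>_def by (simp add: field_simps)
      then have "3.5 < sqrt (real r)" using Dpos by (simp add: mult.commute)
      then have "3.5^2 < (sqrt (real r))^2" by (intro power_strict_mono) auto
      then have r12: "12.25 < real r" by (simp add: power2_eq_square)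
      have rho0: "\<rho> > 0" using Dpos sr by (simp add: \<rho>_def)
      have "real r * \<rho>^2 = (49/4) * D^2"
        using r1 by (simp add: \<rho>_def power_divide power_mult_distrib)
      then have ineq: "2 * D^2 \<le> real r * \<rho>^2" using zero_le_power2[of D] by linarith
      define c where "c = (\<lambda>Y::'a set. (1 / real (card Y)) *\<^sub>R (\<Sum>y\<in>Y. y))"
      define Lr where "Lr = (\<lambda>Y::'a set. {xs. set xs \<subseteq> Y \<and> length xs = r})"
      define G where "G = (\<lambda>Y. {t \<in> Lr Y. norm ((1 / real r) *\<^sub>R sum_list t - c Y) \<le> \<rho>})"
      define H where "H = {Y. Y \<subseteq> P \<and> \<epsilon> * real n \<le> real (card Y)}"
      have finH: "finite H" by (rule finite_subset[of _ "Pow P"]) (auto simp: H_def finP)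
      have c_hull: "c Y \<in> convex hull Y" if "Y \<in> H" for Y
      proof -
        have fY: "finite Y" and neY: "Y \<noteq> {}" using that heavy_fin heavy_ne by (auto simp: H_def)
        have "(\<Sum>y\<in>Y. (1 / real (card Y)) *\<^sub>R y) \<in> convex hull Y"
          using fY neY by (intro convex_sum) (auto simp: hull_inc card_gt_0_iff)
        then show ?thesis by (simp add: c_def scaleR_sum_right)
      qed
      have Gbig: "(\<epsilon> * real n)^r \<le> 2 * real (card (G Y))" if "Y \<in> H" for Y
      proof -
        have fY: "finite Y" and neY: "Y \<noteq> {}" using that heavy_fin heavy_ne by (auto simp: H_def)
        have bd: "\<forall>y\<in>Y. norm (y - c Y) \<le> D"
        proof
          fix y assume y: "y \<in> Y"
          have "Y \<subseteq> cball y D" using bdP y that by (auto simp: H_def subset_iff)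
          then have "convex hull Y \<subseteq> cball y D" by (intro hull_minimal) auto
          then show "norm (y - c Y) \<le> D" using c_hull[OF that] by (auto simp: dist_norm)
        qed
        have "real (card Y)^r \<le> 2 * real (card (G Y))"
          using good_count[OF fY neY r1 rho0 bd _ ineq] by (simp add: G_def Lr_def c_def)
        moreover have "(\<epsilon> * real n)^r \<le> real (card Y)^r"
          using that eps by (intro power_mono) (auto simp: H_def)
        ultimately show ?thesis by linarith
      qed
      define Fam where "Fam = {M. M \<subseteq> H \<and> (\<forall>A\<in>M. \<forall>B\<in>M. A \<noteq> B \<longrightarrow> G A \<inter> G B = {})}"
      have finFam: "finite Fam" by (rule finite_subset[of _ "Pow H"]) (auto simp: Fam_def finH)
      have "{} \<in> Fam" by (simp add: Fam_def)
      then obtain M where M: "M \<in> Fam" and Mmax: "\<forall>M'\<in>Fam. M \<le> M' \<longrightarrow> M = M'"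
        using finite_has_maximal[OF finFam] by blast
      have MH: "M \<subseteq> H" and Mdisj: "\<forall>A\<in>M. \<forall>B\<in>M. A \<noteq> B \<longrightarrow> G A \<inter> G B = {}"
        using M by (auto simp: Fam_def)
      have finM: "finite M" using finite_subset[OF MH finH] .
      have finLP: "finite (Lr P)" using finite_lists_length_eq[OF finP] by (simp add: Lr_def)
      have GsubP: "G Y \<subseteq> Lr P" if "Y \<in> H" for Y using that by (auto simp: G_def Lr_def H_def)
      have finG: "finite (G Y)" if "Y \<in> H" for Y using finite_subset[OF GsubP[OF that] finLP] .
      have "(\<Sum>Y\<in>M. card (G Y)) = card (\<Union>(G ` M))"
        using card_UN_disjoint[OF finM _ Mdisj] finG MH by (metis subsetD)
      also have "\<dots> \<le> card (Lr P)" using GsubP MH by (intro card_mono[OF finLP]) auto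
      also have "\<dots> = n^r" using card_lists_length_eq[OF finP] cardP by (simp add: Lr_def)
      finally have sumle: "(\<Sum>Y\<in>M. card (G Y)) \<le> n^r" .
      have "real (card M) * (\<epsilon> * real n)^r = (\<Sum>Y\<in>M. (\<epsilon> * real n)^r)" by simp
      also have "\<dots> \<le> (\<Sum>Y\<in>M. 2 * real (card (G Y)))" using Gbig MH by (intro sum_mono) auto
      also have "\<dots> = 2 * real (\<Sum>Y\<in>M. card (G Y))" by (simp add: sum_distrib_left)
      also have "\<dots> \<le> 2 * real n ^ r" using sumle
        by (metis mult_left_mono of_nat_le_iff of_nat_power zero_le_numeral)
      also have "\<dots> = (2 / \<epsilon>^r) * (\<epsilon> * real n)^r" using eps by (simp add: power_mult_distrib)
      finally have "real (card M) * (\<epsilon> * real n)^r \<le> (2 / \<epsilon>^r) * (\<epsilon> * real n)^r" .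
      moreover have "(\<epsilon> * real n)^r > 0" using eps n1 by simp
      ultimately have cM: "real (card M) \<le> 2 / \<epsilon>^r" by (rule mult_right_le_imp_le)
      have r2: "2 \<le> real r" using r12 by simp
      have "2 / \<epsilon>^r \<le> real r ^ r / \<epsilon>^r"
        using rr r2 eps by (intro divide_right_mono) (linarith, simp)
      then have cF: "real (card (c ` M)) \<le> real r ^ r * \<epsilon> powr (- real r)"
        using cM card_image_le[OF finM, of c] unfolding epow by simp
      show ?thesis
      proof (intro exI[of _ "c ` M"] conjI allI impI)
        show "finite (c ` M)" using finM by simp
        show "real (card (c ` M)) \<le> real r ^ r * \<epsilon> powr (- real r)" by (rule cF)
        fix Y assume Y: "Y \<subseteq> P \<and> \<epsilon> * real n \<le> real (card Y)"
        then have YH: "Y \<in> H" by (simp add: H_def)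
        have Gne: "G Y \<noteq> {}"
        proof
          assume "G Y = {}"
          moreover have "(\<epsilon> * real n)^r > 0" using eps n1 by simp
          ultimately show False using Gbig[OF YH] by simp
        qed
        have "\<exists>Y'\<in>M. G Y \<inter> G Y' \<noteq> {}"
        proof (rule ccontr)
          assume nt: "\<not> (\<exists>Y'\<in>M. G Y \<inter> G Y' \<noteq> {})"
          then have "insert Y M \<in> Fam" using M YH unfolding Fam_def by blast
          then have "M = insert Y M" using Mmax by blast
          then have "Y \<in> M" by blast
          then show False using nt Gne by blast
        qed
        then obtain Y' t where Y': "Y' \<in> M" and t: "t \<in> G Y" "t \<in> G Y'" by blast
        define p where "p = (1 / real r) *\<^sub>R sum_list t"
        have tl: "set t \<subseteq> Y" "length t = r" using t(1) by (auto simp: G_def Lr_def)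
        have "t \<noteq> []" using tl r1 by auto
        then have phull: "p \<in> convex hull Y" using avg_in_hull[OF tl(1)] tl by (simp add: p_def)
        have "norm (p - c Y') \<le> \<rho>" using t(2) by (simp add: G_def p_def)
        then have mem: "p - c Y' \<in> (\<lambda>b. \<rho> *\<^sub>R b) ` cball 0 1" by (rule ball_rep)
        have "\<exists>f v. p = f + v \<and> f \<in> c ` M \<and> v \<in> (\<lambda>b. \<rho> *\<^sub>R b) ` cball 0 1"
          by (intro exI[of _ "c Y'"] exI[of _ "p - c Y'"]) (use mem Y' in simp)
        then have "p \<in> {f + v | f v. f \<in> c ` M \<and> v \<in> (\<lambda>b. \<rho> *\<^sub>R b) ` cball 0 1}"
          by simp
        then show "{f + v | f v. f \<in> c ` M \<and> v \<in> (\<lambda>b. (3.5 * D / sqrt (real r)) *\<^sub>R b) ` cball 0 1}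
                \<inter> convex hull Y \<noteq> {}" using phull unfolding \<rho>_def by blast
      qed
    qed
  qed
qed

end
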